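(* Let $F=F(N,\mathcal D)$ be a connected GSC. Suppose there is $m\ge1$ and a partition $\mathcal D^m=I\cup J$ with $I\cap J=\varnothing$ such that $\big(\bigcup_{\mathbf i\in I}\varphi_{\mathbf i}(F)\big)\cap\big(\bigcup_{\mathbf i\in J}\varphi_{\mathbf i}(F)\big)=\{x\}$ for some $x\in F$. Then $F$ is fragile.
   Context: GSC: $N\ge2$, $\mathcal D\subset\{0,\dots,N-1\}^2$ with $1<|\mathcal D|<N^2$, $\varphi_i(x)=\frac1N(x+i)$, $F$ the attractor $F=\bigcup_{i\in\mathcal D}\varphi_i(F)$; $\varphi_{i_1\cdots i_m}=\varphi_{i_1}\circ\cdots\circ\varphi_{i_m}$. $F$ is fragile if there is a partition $\mathcal D=\mathcal D_1\cup\mathcal D_2$ into disjoint nonempty sets with $\big(\bigcup_{i\in\mathcal D_1}\varphi_i(F)\big)\cap\big(\bigcup_{i\in\mathcal D_2}\varphi_i(F)\big)$ a singleton. *)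

theory Defs
  imports "HOL-Analysis.Analysis"
begin

definition gsc_digits :: "nat \<Rightarrow> (nat \<times> nat) set \<Rightarrow> bool" where
  "gsc_digits N D \<longleftrightarrow> N \<ge> 2 \<and> D \<subseteq> {0..<N} \<times> {0..<N} \<and> 1 < card D \<and> card D < N^2"

definition phi :: "nat \<Rightarrow> nat \<times> nat \<Rightarrow> real \<times> real \<Rightarrow> real \<times> real" where
  "phi N i x = (1 / real N) *\<^sub>R (x + (real (fst i), real (snd i)))"

text \<open>Composition along a word: phi_{i1...im} = phi_{i1} o ... o phi_{im}.\<close>
definition phiw :: "nat \<Rightarrow> (nat \<times> nat) list \<Rightarrow> real \<times> real \<Rightarrow> real \<times> real" where
  "phiw N w = foldr (\<lambda>i f. phi N i \<circ> f) w id"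

definition gsc_attractor :: "nat \<Rightarrow> (nat \<times> nat) set \<Rightarrow> (real \<times> real) set" where
  "gsc_attractor N D = (THE F. compact F \<and> F \<noteq> {} \<and> F = (\<Union>i\<in>D. phi N i ` F))"

definition words :: "(nat \<times> nat) set \<Rightarrow> nat \<Rightarrow> (nat \<times> nat) list set" where
  "words D m = {w. length w = m \<and> set w \<subseteq> D}"

definition fragile :: "nat \<Rightarrow> (nat \<times> nat) set \<Rightarrow> bool" where
  "fragile N D \<longleftrightarrow> (\<exists>D1 D2. D1 \<union> D2 = D \<and> D1 \<inter> D2 = {} \<and> D1 \<noteq> {} \<and> D2 \<noteq> {} \<and>
      (\<exists>y. (\<Union>i\<in>D1. phi N i ` gsc_attractor N D) \<inter> (\<Union>i\<in>D2. phi N i ` gsc_attractor N D) = {y}))"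

end

theory Submission
  imports Defs
begin

lemma phiw_Nil[simp]: "phiw N [] = id" by (simp add: phiw_def)
lemma phiw_Cons[simp]: "phiw N (i#w) = phi N i \<circ> phiw N w" by (simp add: phiw_def)

lemma words_0: "words D 0 = {[]}" by (auto simp: words_def)

lemma words_Suc_iff: "(i#w \<in> words D (Suc n)) \<longleftrightarrow> i \<in> D \<and> w \<in> words D n"
  by (auto simp: words_def)

lemma words_Suc_cases: "v \<in> words D (Suc n) \<Longrightarrow> \<exists>i w. v = i#w \<and> i \<in> D \<and> w \<in> words D n"
  by (cases v) (auto simp: words_def)

lemma words_finite: "finite D \<Longrightarrow> finite (words D n)"
  using finite_lists_length_eq[of D n] by (simp add: words_def conj_commute)

lemma words_nonempty: "i \<in> D \<Longrightarrow> replicate n i \<in> words D n"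
  by (auto simp: words_def)

lemma decomp:
  assumes "S = (\<Union>i\<in>D. phi N i ` S)"
  shows "S = (\<Union>w\<in>words D n. phiw N w ` S)"
proof (induction n)
  case 0
  then show ?case by (simp add: words_0)
next
  case (Suc n)
  have "(\<Union>w\<in>words D (Suc n). phiw N w ` S) = (\<Union>i\<in>D. phi N i ` (\<Union>w\<in>words D n. phiw N w ` S))"
  proof (intro equalityI subsetI)
    fix y assume "y \<in> (\<Union>w\<in>words D (Suc n). phiw N w ` S)"
    then obtain v s where "v \<in> words D (Suc n)" "s \<in> S" "y = phiw N v s" by auto
    then obtain i w where "v = i#w" "i \<in> D" "w \<in> words D n" using words_Suc_cases by blast
    then show "y \<in> (\<Union>i\<in>D. phi N i ` (\<Union>w\<in>words D n. phiw N w ` S))"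
      using \<open>s \<in> S\<close> \<open>y = _\<close> by auto
  next
    fix y assume "y \<in> (\<Union>i\<in>D. phi N i ` (\<Union>w\<in>words D n. phiw N w ` S))"
    then obtain i w s where "i \<in> D" "w \<in> words D n" "s \<in> S" "y = phi N i (phiw N w s)" by auto
    then have "i#w \<in> words D (Suc n)" "y = phiw N (i#w) s" by (auto simp: words_Suc_iff)
    then show "y \<in> (\<Union>w\<in>words D (Suc n). phiw N w ` S)" using \<open>s \<in> S\<close> by blast
  qed
  also have "\<dots> = S" using Suc.IH[symmetric] assms[symmetric] by simp
  finally show ?case by simp
qed

lemma phi_inj: "N > 0 \<Longrightarrow> inj (phi N i)"
  by (auto simp: inj_def phi_def)

lemma phi_cont: "continuous_on A (phi N i)"
  unfolding phi_def by (intro continuous_intros)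

lemma phiw_cont: "continuous_on A (phiw N w)"
proof (induction w arbitrary: A)
  case Nil then show ?case by (simp add: continuous_on_id)
next
  case (Cons i w) then show ?case
    by (simp only: phiw_Cons) (rule continuous_on_compose[OF Cons phi_cont])
qed

lemma phiw_diff: "phiw N w a - phiw N w b = (1 / real N ^ length w) *\<^sub>R (a - b)"
proof (induction w)
  case Nil then show ?case by simp
next
  case (Cons i w)
  have "phi N i u - phi N i v = (1 / real N) *\<^sub>R (u - v)" for u v
    by (simp add: phi_def scaleR_right_distrib scaleR_diff_right)
  then show ?case using Cons by simp
qed

lemma phiw_dist: "N > 0 \<Longrightarrow> dist (phiw N w a) (phiw N w b) = dist a b / real N ^ length w"
  by (simp add: dist_norm phiw_diff)

lemma att_unique:
  assumes N: "N > 1" and K: "compact K" "K = (\<Union>i\<in>D. phi N i ` K)"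
    and L: "compact L" "L \<noteq> {}" "L = (\<Union>i\<in>D. phi N i ` L)"
  shows "K \<subseteq> L"
proof
  fix y assume y: "y \<in> K"
  have "bounded (K \<union> L)" using K L compact_imp_bounded by blast
  then obtain B0 where B0: "\<forall>a\<in>K \<union> L. norm a \<le> B0" unfolding bounded_iff by blast
  have B: "\<And>a. a \<in> K \<union> L \<Longrightarrow> norm a \<le> B0" using B0 by blast
  obtain l where l: "l \<in> L" using L by auto
  have bnd: "infdist y L \<le> 2 * B0 / real N ^ n" for n
  proof -
    have "y \<in> (\<Union>w\<in>words D n. phiw N w ` K)" using decomp[OF K(2), of n] y by blast
    then obtain w k where w: "w \<in> words D n" "k \<in> K" "y = phiw N w k" by auto
    have "phiw N w l \<in> L" using decomp[OF L(3), of n] w l by blast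
    then have "infdist y L \<le> dist y (phiw N w l)" by (rule infdist_le)
    also have "\<dots> = dist k l / real N ^ n" using w N by (simp add: phiw_dist words_def)
    also have "\<dots> \<le> 2 * B0 / real N ^ n"
    proof (rule divide_right_mono)
      have "dist k l \<le> norm k + norm l" by (simp add: dist_norm norm_triangle_ineq4)
      also have "\<dots> \<le> 2 * B0" using B[of k] B[of l] w l by auto
      finally show "dist k l \<le> 2 * B0" .
    qed simp
    finally show ?thesis .
  qed
  have "infdist y L = 0"
  proof (rule ccontr)
    assume "infdist y L \<noteq> 0"
    then have e: "infdist y L > 0" using infdist_nonneg[of y L] by linarith
    obtain n where n: "2 * B0 / infdist y L < real N ^ n"
      using real_arch_pow[of "real N" "2 * B0 / infdist y L"] N by auto
    have "2 * B0 < infdist y L * real N ^ n" using n e by (simp add: divide_less_eq mult.commute)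
    then have "2 * B0 / real N ^ n < infdist y L" using N by (simp add: divide_less_eq)
    then show False using bnd[of n] by linarith
  qed
  then show "y \<in> L" using in_closed_iff_infdist_zero[of L y] L compact_imp_closed by blast
qed

lemma att_exists:
  assumes "gsc_digits N D"
  shows "\<exists>F. compact F \<and> F \<noteq> {} \<and> F = (\<Union>i\<in>D. phi N i ` F)"
proof -
  have N: "N \<ge> 2" and Dsub: "D \<subseteq> {0..<N} \<times> {0..<N}" and Dc: "1 < card D"
    using assms by (auto simp: gsc_digits_def)
  have finD: "finite D" using Dsub finite_subset by blast
  have Dne: "D \<noteq> {}" using Dc by auto
  define H where "H S = (\<Union>i\<in>D. phi N i ` S)" for S :: "(real \<times> real) set"
  define Q where "Q = {0..1::real} \<times> {0..1::real}"
  define A where "A n = (H ^^ n) Q" for n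
  have unit: "0 \<le> (a + real j) / real N \<and> (a + real j) / real N \<le> 1"
    if "0 \<le> a" "a \<le> 1" "j < N" for a :: real and j
  proof -
    have "real j + 1 \<le> real N" using that by linarith
    then show ?thesis using that N by (simp add: divide_simps)
  qed
  have HQ: "H Q \<subseteq> Q"
  proof
    fix y assume "y \<in> H Q"
    then obtain i a b where i: "i \<in> D" and ab: "a \<in> {0..1}" "b \<in> {0..1}" and y: "y = phi N i (a, b)"
      by (auto simp: H_def Q_def)
    have "fst i < N" "snd i < N" using i Dsub by auto
    then show "y \<in> Q" using unit[of a "fst i"] unit[of b "snd i"] ab
      by (simp add: y Q_def phi_def add_divide_distrib[symmetric])
  qed
  have Hmono: "S \<subseteq> T \<Longrightarrow> H S \<subseteq> H T" for S T by (auto simp: H_def)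
  have ASuc: "A (Suc n) = H (A n)" for n by (simp add: A_def)
  have dec: "A (Suc n) \<subseteq> A n" for n
  proof (induction n)
    case 0 then show ?case using HQ by (simp add: A_def)
  next
    case (Suc n) then show ?case using Hmono by (simp add: ASuc)
  qed
  have decle: "m \<le> n \<Longrightarrow> A n \<subseteq> A m" for m n
    using lift_Suc_antimono_le[of A, OF dec] by blast
  have Hcomp: "compact S \<Longrightarrow> compact (H S)" for S
    unfolding H_def using finD by (intro compact_UN) (auto intro: compact_continuous_image phi_cont)
  have Hne: "S \<noteq> {} \<Longrightarrow> H S \<noteq> {}" for S using Dne by (auto simp: H_def)
  have Acomp: "compact (A n)" for n
    by (induction n) (auto simp: ASuc Hcomp, simp add: A_def Q_def compact_Times)
  have Ane: "A n \<noteq> {}" for n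
    by (induction n) (auto simp: ASuc Hne, simp add: A_def Q_def)
  define F where "F = \<Inter>(range A)"
  have Fc: "compact F" unfolding F_def by (rule compact_Inter) (auto intro: Acomp)
  have Fne: "F \<noteq> {}" unfolding F_def using compact_nest[of A] Acomp Ane decle by blast
  have sub1: "H F \<subseteq> F"
  proof
    fix y assume "y \<in> H F"
    then have "y \<in> H (A n)" for n using Hmono[of F "A n"] by (auto simp: F_def)
    then have "y \<in> A n" for n using dec[of n] by (auto simp: ASuc)
    then show "y \<in> F" by (auto simp: F_def)
  qed
  have sub2: "F \<subseteq> H F"
  proof
    fix y assume y: "y \<in> F"
    have "\<exists>i\<in>D. \<forall>n. y \<in> phi N i ` A n"
    proof (rule ccontr)
      assume "\<not> ?thesis"
      then have "\<forall>i\<in>D. \<exists>n. y \<notin> phi N i ` A n" by auto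
      then obtain nn where nn: "\<And>i. i \<in> D \<Longrightarrow> y \<notin> phi N i ` A (nn i)" by metis
      define M where "M = Max (nn ` D)"
      have "y \<in> A (Suc M)" using y by (auto simp: F_def)
      then obtain i where i: "i \<in> D" "y \<in> phi N i ` A M" by (auto simp: ASuc H_def)
      have "nn i \<le> M" using i finD by (auto simp: M_def)
      then have "A M \<subseteq> A (nn i)" by (rule decle)
      then show False using nn[OF i(1)] i(2) by blast
    qed
    then obtain i where i: "i \<in> D" "\<And>n. y \<in> phi N i ` A n" by blast
    have inj: "inj (phi N i)" using N by (intro phi_inj) simp
    define z where "z = inv (phi N i) y"
    have "z \<in> A n" for n
    proof -
      obtain u where "u \<in> A n" "y = phi N i u" using i(2)[of n] by blast
      then show ?thesis using inj by (simp add: z_def)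
    qed
    then have "z \<in> F" by (auto simp: F_def)
    moreover have "y = phi N i z"
    proof -
      obtain u where "y = phi N i u" using i(2)[of 0] by blast
      then show ?thesis using inj by (simp add: z_def)
    qed
    ultimately show "y \<in> H F" using i(1) by (auto simp: H_def)
  qed
  show ?thesis using Fc Fne sub1 sub2 by (intro exI[of _ F]) (auto simp: H_def)
qed

lemma att_props:
  assumes "gsc_digits N D"
  shows "compact (gsc_attractor N D) \<and> gsc_attractor N D \<noteq> {} \<and>
         gsc_attractor N D = (\<Union>i\<in>D. phi N i ` gsc_attractor N D)"
proof -
  have N: "N > 1" using assms by (auto simp: gsc_digits_def)
  have "\<exists>!F. compact F \<and> F \<noteq> {} \<and> F = (\<Union>i\<in>D. phi N i ` F)"
  proof -
    obtain F where F: "compact F \<and> F \<noteq> {} \<and> F = (\<Union>i\<in>D. phi N i ` F)"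
      using att_exists[OF assms] by blast
    show ?thesis
    proof (rule ex1I[of _ F])
      fix G assume G: "compact G \<and> G \<noteq> {} \<and> G = (\<Union>i\<in>D. phi N i ` G)"
      show "G = F" using att_unique[OF N, of G D F] att_unique[OF N, of F D G] F G by blast
    qed (rule F)
  qed
  then show ?thesis unfolding gsc_attractor_def by (rule theI')
qed

definition fragS :: "nat \<Rightarrow> (nat \<times> nat) set \<Rightarrow> (real \<times> real) set \<Rightarrow> bool" where
  "fragS N D F \<longleftrightarrow> (\<exists>D1 D2. D1 \<union> D2 = D \<and> D1 \<inter> D2 = {} \<and> D1 \<noteq> {} \<and> D2 \<noteq> {} \<and>
      (\<exists>y. (\<Union>i\<in>D1. phi N i ` F) \<inter> (\<Union>i\<in>D2. phi N i ` F) = {y}))"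

lemma nonsplit:
  assumes inv: "F = (\<Union>i\<in>D. phi N i ` F)"
    and IJ: "I \<union> J = words D (Suc k)" "I \<inter> J = {}"
    and x: "(\<Union>w\<in>I. phiw N w ` F) \<inter> (\<Union>w\<in>J. phiw N w ` F) = {x}"
    and ns: "\<not> (\<exists>i\<in>D. (\<exists>w. i#w \<in> I) \<and> (\<exists>w. i#w \<in> J))"
  shows "fragS N D F"
proof -
  define D1 where "D1 = {i\<in>D. \<exists>w. i#w \<in> I}"
  define D2 where "D2 = {i\<in>D. \<exists>w. i#w \<in> J}"
  have dec: "F = (\<Union>w\<in>words D k. phiw N w ` F)" by (rule decomp[OF inv])
  have U: "D1 \<union> D2 = D"
  proof
    show "D1 \<union> D2 \<subseteq> D" by (auto simp: D1_def D2_def)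
  next
    show "D \<subseteq> D1 \<union> D2"
    proof
      fix i assume i: "i \<in> D"
      then have "i # replicate k i \<in> I \<union> J" using IJ(1) words_nonempty[of i D "Suc k"] by simp
      then show "i \<in> D1 \<union> D2" using i by (auto simp: D1_def D2_def)
    qed
  qed
  have Dj: "D1 \<inter> D2 = {}" using ns by (auto simp: D1_def D2_def)
  have "I \<noteq> {}" using x by auto
  then obtain v where "v \<in> I" by blast
  then obtain i w where "v = i#w" "i \<in> D" using IJ(1) words_Suc_cases[of v D k] by blast
  then have D1ne: "D1 \<noteq> {}" using \<open>v \<in> I\<close> unfolding D1_def by blast
  have "J \<noteq> {}" using x by auto
  then obtain v' where "v' \<in> J" by blast
  then obtain i' w' where "v' = i'#w'" "i' \<in> D" using IJ(1) words_Suc_cases[of v' D k] by blast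
  then have D2ne: "D2 \<noteq> {}" using \<open>v' \<in> J\<close> unfolding D2_def by blast
  have eq: "(\<Union>w\<in>K. phiw N w ` F) = (\<Union>i\<in>{i\<in>D. \<exists>w. i#w \<in> K}. phi N i ` F)"
    if K: "K \<subseteq> words D (Suc k)" and cl: "\<And>i w. i \<in> D \<Longrightarrow> (\<exists>w'. i#w' \<in> K) \<Longrightarrow> w \<in> words D k \<Longrightarrow> i#w \<in> K"
    for K
  proof (intro equalityI subsetI)
    fix y assume "y \<in> (\<Union>w\<in>K. phiw N w ` F)"
    then obtain v f where v: "v \<in> K" "f \<in> F" "y = phiw N v f" by auto
    then obtain i w where iw: "v = i#w" "i \<in> D" "w \<in> words D k" using K words_Suc_cases by blast
    have "phiw N w f \<in> F" using dec iw v by blast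
    then show "y \<in> (\<Union>i\<in>{i\<in>D. \<exists>w. i#w \<in> K}. phi N i ` F)" using iw v by (intro UN_I[of i]) auto
  next
    fix y assume "y \<in> (\<Union>i\<in>{i\<in>D. \<exists>w. i#w \<in> K}. phi N i ` F)"
    then obtain i f where i: "i \<in> D" "\<exists>w. i#w \<in> K" "f \<in> F" "y = phi N i f" by blast
    then obtain w g where "w \<in> words D k" "g \<in> F" "f = phiw N w g" using dec by blast
    then show "y \<in> (\<Union>w\<in>K. phiw N w ` F)" using cl[of i w] i
      by (intro UN_I[of "i#w"]) auto
  qed
  have eqI: "(\<Union>w\<in>I. phiw N w ` F) = (\<Union>i\<in>D1. phi N i ` F)"
    unfolding D1_def
  proof (rule eq)
    show "I \<subseteq> words D (Suc k)" using IJ by blast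
    fix i w assume "i \<in> D" "\<exists>w'. i#w' \<in> I" "w \<in> words D k"
    then have "i#w \<in> I \<union> J" using IJ(1) by (simp add: words_Suc_iff)
    then show "i#w \<in> I" using ns \<open>i \<in> D\<close> \<open>\<exists>w'. i#w' \<in> I\<close> by blast
  qed
  have eqJ: "(\<Union>w\<in>J. phiw N w ` F) = (\<Union>i\<in>D2. phi N i ` F)"
    unfolding D2_def
  proof (rule eq)
    show "J \<subseteq> words D (Suc k)" using IJ by blast
    fix i w assume "i \<in> D" "\<exists>w'. i#w' \<in> J" "w \<in> words D k"
    then have "i#w \<in> I \<union> J" using IJ(1) by (simp add: words_Suc_iff)
    then show "i#w \<in> J" using ns \<open>i \<in> D\<close> \<open>\<exists>w'. i#w' \<in> J\<close> by blast
  qed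
  show ?thesis unfolding fragS_def using U Dj D1ne D2ne x eqI eqJ by metis
qed

lemma main_aux:
  assumes inv: "F = (\<Union>i\<in>D. phi N i ` F)" and Fc: "compact F" and Fne: "F \<noteq> {}"
    and con: "connected F" and N: "N > 0" and finD: "finite D"
  shows "I \<union> J = words D (Suc k) \<Longrightarrow> I \<inter> J = {} \<Longrightarrow>
    (\<Union>w\<in>I. phiw N w ` F) \<inter> (\<Union>w\<in>J. phiw N w ` F) = {x} \<Longrightarrow> fragS N D F"
proof (induction k arbitrary: I J x)
  case 0
  have "\<not> (\<exists>i\<in>D. (\<exists>w. i#w \<in> I) \<and> (\<exists>w. i#w \<in> J))"
  proof
    assume "\<exists>i\<in>D. (\<exists>w. i#w \<in> I) \<and> (\<exists>w. i#w \<in> J)"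
    then obtain i w w' where "i#w \<in> I" "i#w' \<in> J" by blast
    moreover then have "i#w \<in> words D (Suc 0)" "i#w' \<in> words D (Suc 0)" using "0.prems"(1) by blast+
    moreover then have "w = []" "w' = []" by (auto simp: words_def)
    ultimately show False using "0.prems"(2) by blast
  qed
  then show ?case using nonsplit[OF inv "0.prems"] by blast
next
  case (Suc k)
  show ?case
  proof (cases "\<exists>i\<in>D. (\<exists>w. i#w \<in> I) \<and> (\<exists>w. i#w \<in> J)")
    case False
    then show ?thesis using nonsplit[OF inv Suc.prems] by blast
  next
    case True
    then obtain i w1 w2 where i: "i \<in> D" "i#w1 \<in> I" "i#w2 \<in> J" by blast
    define I' where "I' = {w. i#w \<in> I}"
    define J' where "J' = {w. i#w \<in> J}"
    have U: "I' \<union> J' = words D (Suc k)"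
    proof (intro equalityI subsetI)
      fix w assume "w \<in> I' \<union> J'"
      then have "i#w \<in> words D (Suc (Suc k))" using Suc.prems(1) by (auto simp: I'_def J'_def)
      then show "w \<in> words D (Suc k)" by (simp add: words_Suc_iff)
    next
      fix w assume "w \<in> words D (Suc k)"
      then have "i#w \<in> I \<union> J" using Suc.prems(1) i(1) by (simp add: words_Suc_iff)
      then show "w \<in> I' \<union> J'" by (auto simp: I'_def J'_def)
    qed
    have Dj: "I' \<inter> J' = {}" using Suc.prems(2) by (auto simp: I'_def J'_def)
    define A where "A = (\<Union>w\<in>I'. phiw N w ` F)"
    define B where "B = (\<Union>w\<in>J'. phiw N w ` F)"
    have finW: "finite (words D (Suc k))" by (rule words_finite[OF finD])
    have Ac: "closed A" unfolding A_def
      using U finite_subset[OF _ finW, of I'] Fc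
      by (intro compact_imp_closed compact_UN) (auto intro: compact_continuous_image phiw_cont)
    have Bc: "closed B" unfolding B_def
      using U finite_subset[OF _ finW, of J'] Fc
      by (intro compact_imp_closed compact_UN) (auto intro: compact_continuous_image phiw_cont)
    have "F = (\<Union>w\<in>I' \<union> J'. phiw N w ` F)" using decomp[OF inv, of "Suc k"] U by simp
    then have AB: "F = A \<union> B" by (simp add: A_def B_def UN_Un)
    have Ane: "A \<noteq> {}" using i Fne by (auto simp: A_def I'_def)
    have Bne: "B \<noteq> {}" using i Fne by (auto simp: B_def J'_def)
    have "A \<inter> B \<noteq> {}"
      using con Ac Bc AB Ane Bne unfolding connected_closed by blast
    then obtain z where z: "z \<in> A \<inter> B" by blast
    have sub: "phi N i ` (A \<inter> B) \<subseteq> {x}"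
    proof -
      have "phi N i ` A \<subseteq> (\<Union>w\<in>I. phiw N w ` F)"
        by (auto simp: A_def I'_def image_comp intro!: UN_I)
      moreover have "phi N i ` B \<subseteq> (\<Union>w\<in>J. phiw N w ` F)"
        by (auto simp: B_def J'_def image_comp intro!: UN_I)
      ultimately show ?thesis using Suc.prems(3) by blast
    qed
    have inj: "inj (phi N i)" using N by (rule phi_inj)
    have "A \<inter> B = {z}"
    proof
      show "A \<inter> B \<subseteq> {z}"
      proof
        fix z' assume "z' \<in> A \<inter> B"
        then have "phi N i z' = phi N i z" using sub z by blast
        then show "z' \<in> {z}" using inj by (auto dest: injD)
      qed
    qed (use z in auto)
    then show ?thesis using Suc.IH[OF U Dj] by (simp add: A_def B_def)
  qed
qed

theorem mainTheorem9:
  fixes N :: nat and D :: "(nat \<times> nat) set" and m :: nat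
    and I J :: "(nat \<times> nat) list set" and x :: "real \<times> real"
  assumes "gsc_digits N D"
    and "connected (gsc_attractor N D)"
    and "m \<ge> 1"
    and "I \<union> J = words D m" and "I \<inter> J = {}"
    and "x \<in> gsc_attractor N D"
    and "(\<Union>w\<in>I. phiw N w ` gsc_attractor N D) \<inter> (\<Union>w\<in>J. phiw N w ` gsc_attractor N D) = {x}"
  shows "fragile N D"
proof -
  have P: "compact (gsc_attractor N D) \<and> gsc_attractor N D \<noteq> {} \<and>
         gsc_attractor N D = (\<Union>i\<in>D. phi N i ` gsc_attractor N D)" by (rule att_props[OF assms(1)])
  have N: "N > 0" using assms(1) by (auto simp: gsc_digits_def)
  have finD: "finite D" using assms(1) finite_subset[of D "{0..<N} \<times> {0..<N}"]
    by (auto simp: gsc_digits_def)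
  obtain k where m: "m = Suc k" using assms(3) by (cases m) auto
  have "fragS N D (gsc_attractor N D)"
    using main_aux[where F="gsc_attractor N D" and D=D and N=N and I=I and J=J and k=k and x=x] P N finD assms m by blast
  then show ?thesis by (simp add: fragS_def fragile_def)
qed

end
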